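(* Let $i\geq 1$ and $n\geq 1$. Let $T(i,n)$ be the set of pairs $(L_1,L_2)$ of walks of length $n$ with steps $(1,1)$ and $(1,-1)$, where $L_1$ starts at $(0,0)$ and $L_2$ starts at $(0,2i)$, such that $L_1$ and $L_2$ share no common point before they reach a common ending point at $x=n$. Let $P(i,n)$ be the set of lattice paths of length $2n$ with steps $(1,1)$ and $(1,-1)$ starting at $(0,2i)$ that end on the $x$-axis and do not touch the $x$-axis at any earlier point (hence never go below it). Then there exists a bijection between $T(i,n)$ and $P(i,n)$. *)

theory Defs
  imports Main
begin

text \<open>A walk of length n with steps (1,1) and (1,-1) is encoded by its list of
  vertical steps, each equal to 1 or -1. Its k-th point is (k, start + sum of the
  first k steps).\<close>

definition steps_ok :: "int list \<Rightarrow> nat \<Rightarrow> bool" where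
  "steps_ok s n \<longleftrightarrow> length s = n \<and> set s \<subseteq> {1, -1}"

definition height :: "int \<Rightarrow> int list \<Rightarrow> nat \<Rightarrow> int" where
  "height y0 s k = y0 + sum_list (take k s)"

definition T_set :: "nat \<Rightarrow> nat \<Rightarrow> (int list \<times> int list) set" where
  "T_set i n = {(s1, s2). steps_ok s1 n \<and> steps_ok s2 n \<and>
      height 0 s1 n = height (2 * int i) s2 n \<and>
      (\<forall>k<n. height 0 s1 k \<noteq> height (2 * int i) s2 k)}"

definition P_set :: "nat \<Rightarrow> nat \<Rightarrow> int list set" where
  "P_set i n = {s. steps_ok s (2 * n) \<and> height (2 * int i) s (2 * n) = 0 \<and>
      (\<forall>k<2 * n. height (2 * int i) s k \<noteq> 0)}"

end

theory Submission
  imports Defs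
begin

fun F :: "int list \<Rightarrow> int list \<Rightarrow> int list" where
  "F (a#as) (b#bs) = b # (-a) # F as bs"
| "F _ _ = []"

fun ev :: "int list \<Rightarrow> int list" where
  "ev (a#b#xs) = a # ev xs"
| "ev _ = []"

fun od :: "int list \<Rightarrow> int list" where
  "od (a#b#xs) = b # od xs"
| "od _ = []"

lemma F_len: "length as = length bs \<Longrightarrow> length (F as bs) = 2 * length as"
  by (induction as arbitrary: bs) (case_tac bs; auto)+

lemma F_take: "take (2*k) (F as bs) = F (take k as) (take k bs)"
proof (induction as arbitrary: bs k)
  case Nil then show ?case by simp
next
  case (Cons a as)
  then show ?case by (cases bs; cases k) auto
qed

lemma F_take_odd: "k < length as \<Longrightarrow> length bs = length as \<Longrightarrow>
   take (2*k+1) (F as bs) = F (take k as) (take k bs) @ [bs!k]"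
proof (induction as arbitrary: bs k)
  case Nil then show ?case by simp
next
  case (Cons a as)
  then show ?case by (cases bs; cases k) auto
qed

lemma F_sum: "length as = length bs \<Longrightarrow> sum_list (F as bs) = sum_list bs - sum_list as"
  by (induction as arbitrary: bs) (case_tac bs; auto)+

lemma F_set: "set (F as bs) \<subseteq> set bs \<union> uminus ` set as"
proof (induction as arbitrary: bs)
  case Nil then show ?case by simp
next
  case (Cons a as)
  then show ?case by (cases bs) auto
qed

lemma od_F: "length as = length bs \<Longrightarrow> od (F as bs) = map uminus as"
  by (induction as arbitrary: bs) (case_tac bs; auto)+

lemma ev_F: "length as = length bs \<Longrightarrow> ev (F as bs) = bs"
  by (induction as arbitrary: bs) (case_tac bs; auto)+

lemma F_od_ev: "even (length p) \<Longrightarrow> F (map uminus (od p)) (ev p) = p"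
  by (induction p rule: ev.induct) auto

lemma len_od: "length (od p) = length p div 2"
  by (induction p rule: od.induct) auto

lemma len_ev: "length (ev p) = length p div 2"
  by (induction p rule: ev.induct) auto

lemma set_od: "set (od p) \<subseteq> set p"
  by (induction p rule: od.induct) auto

lemma set_ev: "set (ev p) \<subseteq> set p"
  by (induction p rule: ev.induct) auto

lemma height_F_even: "length as = length bs \<Longrightarrow>
  height y (F as bs) (2*k) = height y bs k - height 0 as k"
  unfolding height_def by (simp add: F_take F_sum)

lemma parity: "set s \<subseteq> {1, -1} \<Longrightarrow> even (sum_list s - int (length s))"
proof (induction s)
  case Nil then show ?case by simp
next
  case (Cons a s)
  then have a: "a = 1 \<or> a = -1" by auto
  have "set s \<subseteq> {1,-1}" using Cons.prems by simp
  then have "even (sum_list s - int (length s))" using Cons.IH by blast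
  then obtain m where m: "sum_list s - int (length s) = 2*m" using evenE by blast
  have "sum_list (a#s) - int (length (a#s)) = (a - 1) + 2*m" using m by simp
  then have "sum_list (a#s) - int (length (a#s)) = 2*m \<or> sum_list (a#s) - int (length (a#s)) = 2*(m - 1)"
    using a by auto
  then show ?case by (elim disjE; simp only: dvd_triv_left)
qed

lemma D_even:
  assumes "steps_ok s1 n" "steps_ok s2 n"
  shows "even (height (2*int i) s2 j - height 0 s1 j)"
proof -
  have a: "set (take j s1) \<subseteq> {1,-1}" "set (take j s2) \<subseteq> {1,-1}"
    using assms set_take_subset[of j s1] set_take_subset[of j s2] unfolding steps_ok_def by auto
  have "length (take j s1) = length (take j s2)" using assms unfolding steps_ok_def by simp
  then have e: "height (2*int i) s2 j - height 0 s1 j =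
     2 * int i + (sum_list (take j s2) - int (length (take j s2)))
      - (sum_list (take j s1) - int (length (take j s1)))"
    unfolding height_def by simp
  obtain x where x: "sum_list (take j s2) - int (length (take j s2)) = 2*x"
    using parity[OF a(2)] evenE by blast
  obtain y where y: "sum_list (take j s1) - int (length (take j s1)) = 2*y"
    using parity[OF a(1)] evenE by blast
  have "height (2*int i) s2 j - height 0 s1 j = 2 * (int i + x - y)" unfolding e x y by simp
  then show ?thesis by simp
qed

lemma D_pos:
  assumes "(s1, s2) \<in> T_set i n" "i \<ge> 1"
  shows "j < n \<Longrightarrow> height (2*int i) s2 j - height 0 s1 j > 0"
proof (induction j)
  case 0 then show ?case using assms(2) by (simp add: height_def)
next
  case (Suc j)
  from assms(1) have ok: "steps_ok s1 n" "steps_ok s2 n"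
    and ne: "\<forall>k<n. height 0 s1 k \<noteq> height (2 * int i) s2 k" by (auto simp: T_set_def)
  have jl: "j < length s1" "j < length s2" using Suc.prems ok by (auto simp: steps_ok_def)
  have "s1!j \<in> {1,-1}" "s2!j \<in> {1,-1}" using ok jl nth_mem unfolding steps_ok_def by blast+
  have pos: "height (2*int i) s2 j - height 0 s1 j > 0" using Suc by simp
  have ev: "even (height (2*int i) s2 j - height 0 s1 j)" using D_even[OF ok] .
  have ge2: "height (2*int i) s2 j - height 0 s1 j \<ge> 2"
  proof -
    obtain m where "height (2*int i) s2 j - height 0 s1 j = 2*m" using ev evenE by blast
    then show ?thesis using pos by simp
  qed
  have step: "height (2*int i) s2 (Suc j) - height 0 s1 (Suc j)
     = height (2*int i) s2 j - height 0 s1 j + s2!j - s1!j"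
    using jl by (simp add: height_def take_Suc_conv_app_nth)
  have "height (2*int i) s2 (Suc j) - height 0 s1 (Suc j) \<noteq> 0" using ne Suc.prems by auto
  then show ?case using step ge2 \<open>s1!j \<in> {1,-1}\<close> \<open>s2!j \<in> {1,-1}\<close> by auto
qed

theorem proposition4p1:
  fixes i n :: nat
  assumes "i \<ge> 1" and "n \<ge> 1"
  shows "\<exists>f. bij_betw f (T_set i n) (P_set i n)"
proof -
  let ?f = "\<lambda>(a, b). F a b"
  let ?g = "\<lambda>p. (map uminus (od p), ev p)"
  have 1: "\<forall>x\<in>T_set i n. ?g (?f x) = x"
  proof
    fix x assume "x \<in> T_set i n"
    then obtain s1 s2 where x: "x = (s1, s2)" and "length s1 = n" "length s2 = n"
      unfolding T_set_def steps_ok_def by blast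
    then show "?g (?f x) = x" using od_F[of s1 s2] ev_F[of s1 s2] by simp
  qed
  have 2: "\<forall>p\<in>P_set i n. ?f (?g p) = p"
  proof
    fix p assume "p \<in> P_set i n"
    then have "length p = 2*n" unfolding P_set_def steps_ok_def by blast
    then show "?f (?g p) = p" using F_od_ev[of p] by simp
  qed
  have 3: "?f ` T_set i n \<subseteq> P_set i n"
  proof
    fix p assume "p \<in> ?f ` T_set i n"
    then obtain s1 s2 where T: "(s1, s2) \<in> T_set i n" and p: "p = F s1 s2" by auto
    from T have ok: "steps_ok s1 n" "steps_ok s2 n"
      and eq: "height 0 s1 n = height (2 * int i) s2 n"
      and ne: "\<forall>k<n. height 0 s1 k \<noteq> height (2 * int i) s2 k" by (auto simp: T_set_def)
    have len: "length s1 = n" "length s2 = n" using ok by (auto simp: steps_ok_def)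
    have "set p \<subseteq> {1,-1}"
    proof
      fix x assume "x \<in> set p"
      then have "x \<in> set s2 \<or> x \<in> uminus ` set s1" using F_set[of s1 s2] p by blast
      then show "x \<in> {1,-1}" using ok unfolding steps_ok_def by auto
    qed
    then have "steps_ok p (2*n)"
      using len F_len[of s1 s2] unfolding p steps_ok_def by simp
    moreover have "height (2 * int i) p (2 * n) = 0"
      using height_F_even[of s1 s2 "2*int i" n] len eq p by simp
    moreover have "\<forall>k<2 * n. height (2 * int i) p k \<noteq> 0"
    proof (intro allI impI)
      fix k assume k: "k < 2*n"
      show "height (2 * int i) p k \<noteq> 0"
      proof (cases "even k")
        case True
        then obtain j where j: "k = 2*j" by auto
        then have "j < n" using k by simp
        then have "height 0 s1 j \<noteq> height (2 * int i) s2 j" using ne by blast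
        moreover have "height (2*int i) p k = height (2*int i) s2 j - height 0 s1 j"
          unfolding p j using height_F_even[of s1 s2 "2*int i" j] len by simp
        ultimately show ?thesis by simp
      next
        case False
        then obtain j where j: "k = 2*j+1" using oddE by blast
        then have jn: "j < n" using k by simp
        have "s2!j \<in> set s2" using jn len by simp
        then have "s2!j \<in> {1,-1}" using ok unfolding steps_ok_def by blast
        have tk: "take (2*j+1) p = F (take j s1) (take j s2) @ [s2!j]"
          using F_take_odd[of j s1 s2] jn len p by simp
        have "sum_list (F (take j s1) (take j s2)) = sum_list (take j s2) - sum_list (take j s1)"
          using F_sum[of "take j s1" "take j s2"] len by simp
        then have "height (2*int i) p k = 2*int i + sum_list (take j s2) - sum_list (take j s1) + s2!j"
          unfolding height_def j tk by simp
        also have "\<dots> = (height (2*int i) s2 j - height 0 s1 j) + s2!j"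
          by (simp add: height_def)
        finally have hk: "height (2*int i) p k = (height (2*int i) s2 j - height 0 s1 j) + s2!j" .
        have "height (2*int i) s2 j - height 0 s1 j \<ge> 2"
        proof -
          have pos: "height (2*int i) s2 j - height 0 s1 j > 0" using D_pos[OF T assms(1) jn] .
          have "even (height (2*int i) s2 j - height 0 s1 j)" using D_even[OF ok] .
          then obtain m where "height (2*int i) s2 j - height 0 s1 j = 2*m" using evenE by blast
          then show ?thesis using pos by simp
        qed
        then show ?thesis using hk \<open>s2!j \<in> {1,-1}\<close> by auto
      qed
    qed
    ultimately show "p \<in> P_set i n" unfolding P_set_def by simp
  qed
  have 4: "?g ` P_set i n \<subseteq> T_set i n"
  proof
    fix x assume "x \<in> ?g ` P_set i n"
    then obtain p where P: "p \<in> P_set i n" and x: "x = ?g p" by blast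
    from P have ok: "steps_ok p (2*n)" and e: "height (2 * int i) p (2 * n) = 0"
      and ne: "\<forall>k<2 * n. height (2 * int i) p k \<noteq> 0" unfolding P_set_def by blast+
    have lp: "length p = 2*n" using ok unfolding steps_ok_def by blast
    have lo1: "length (map uminus (od p)) = n" using lp len_od[of p] by simp
    have lo2: "length (ev p) = n" using lp len_ev[of p] by simp
    have pe: "F (map uminus (od p)) (ev p) = p" using F_od_ev[of p] lp by simp
    have lo: "length (map uminus (od p)) = length (ev p)" using lo1 lo2 by simp
    have h: "height (2*int i) p (2*k) = height (2*int i) (ev p) k - height 0 (map uminus (od p)) k"
      for k
      using height_F_even[OF lo, of "2*int i" k] unfolding pe .
    have sp: "set p \<subseteq> {1,-1}" using ok unfolding steps_ok_def by blast
    have "set (map uminus (od p)) \<subseteq> {1,-1}"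
    proof
      fix x assume "x \<in> set (map uminus (od p))"
      then obtain y where "y \<in> set (od p)" "x = -y" by auto
      then have "y \<in> {1,-1}" using set_od[of p] sp by blast
      then show "x \<in> {1,-1}" using \<open>x = -y\<close> by auto
    qed
    then have s1: "steps_ok (map uminus (od p)) n" using lo1 unfolding steps_ok_def by blast
    have s2: "steps_ok (ev p) n" using set_ev[of p] sp lo2 unfolding steps_ok_def by blast
    have c1: "height 0 (map uminus (od p)) n = height (2 * int i) (ev p) n"
      using h[of n] e by linarith
    have c2: "\<forall>k<n. height 0 (map uminus (od p)) k \<noteq> height (2 * int i) (ev p) k"
    proof (intro allI impI)
      fix k assume "k < n"
      then have "2*k < 2*n" by simp
      then have "height (2 * int i) p (2*k) \<noteq> 0" using ne by blast
      then show "height 0 (map uminus (od p)) k \<noteq> height (2 * int i) (ev p) k"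
        using h[of k] by linarith
    qed
    have "?g p \<in> T_set i n" unfolding T_set_def using s1 s2 c1 c2 by blast
    then show "x \<in> T_set i n" using x by simp
  qed
  have "bij_betw ?f (T_set i n) (P_set i n)"
    by (rule bij_betw_byWitness[OF 1 2 3 4])
  then show ?thesis by blast
qed

end
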